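(* Let $\{M_i\}_{i\in I}$ be a family of complete pointed metric spaces, let $M=\coprod_{i\in I}M_i$ be their metric sum, and let $Y$ be a real Banach space. Then the following are equivalent: (a) $\mathrm{A}(M_i,Y)$ is dense in $\mathrm{Lip}_0(M_i,Y)$ for every $i\in I$; (b) $\mathrm{A}(M,Y)$ is dense in $\mathrm{Lip}_0(M,Y)$.
   Context: Throughout, metric spaces are complete and pointed, with base point $0$. $\mathrm{Lip}_0(M,Y)$ is the Banach space of Lipschitz maps $f:M\to Y$ with $f(0)=0$, normed by $\|f\|=\sup_{p\neq q}\|f(p)-f(q)\|/d(p,q)$. A map $f$ attains its norm toward $y\in Y$ if there is a sequence $(p_n,q_n)$ in $M\times M$ with $p_n\neq q_n$ such that $[f(p_n)-f(q_n)]/d(p_n,q_n)\to y$ and $\|y\|=\|f\|$; $\mathrm{A}(M,Y)$ is the set of $f$ attaining their norm toward some vector. The metric sum $\coprod_{i\in I}M_i$ of pointed metric spaces $(M_i,d_i)$ is the disjoint union of the $M_i$ with all base points identified to a single base point $0$, with metric $d(p,q)=d_i(p,q)$ if $p,q\in M_i$, and $d(p,q)=d_i(p,0)+d_j(0,q)$ if $p\in M_i$, $q\in M_j$, $i\neq j$. *)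

theory Defs
  imports "HOL-Analysis.Analysis"
begin

text \<open>A pointed metric space is given by a carrier set M, a metric d on M
(locale Metric_space) and a base point z in M.\<close>

definition lipnorm :: "'a set \<Rightarrow> ('a \<Rightarrow> 'a \<Rightarrow> real) \<Rightarrow> ('a \<Rightarrow> 'b::real_normed_vector) \<Rightarrow> real" where
  "lipnorm M d f = Sup {norm (f p - f q) / d p q | p q. p \<in> M \<and> q \<in> M \<and> p \<noteq> q}"

text \<open>Lip_0(M,Y): Lipschitz maps on M vanishing at the base point z
(taken to be 0 outside the carrier, so that each map is represented uniquely).\<close>
definition Lip0 :: "'a set \<Rightarrow> ('a \<Rightarrow> 'a \<Rightarrow> real) \<Rightarrow> 'a \<Rightarrow> ('a \<Rightarrow> 'b::real_normed_vector) set" where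
  "Lip0 M d z = {f. f z = 0 \<and> (\<forall>x. x \<notin> M \<longrightarrow> f x = 0) \<and>
      (\<exists>C. \<forall>p\<in>M. \<forall>q\<in>M. norm (f p - f q) \<le> C * d p q)}"

definition attains_toward :: "'a set \<Rightarrow> ('a \<Rightarrow> 'a \<Rightarrow> real) \<Rightarrow> ('a \<Rightarrow> 'b::real_normed_vector) \<Rightarrow> 'b \<Rightarrow> bool" where
  "attains_toward M d f y \<longleftrightarrow>
     (\<exists>p q :: nat \<Rightarrow> 'a. (\<forall>n. p n \<in> M \<and> q n \<in> M \<and> p n \<noteq> q n) \<and>
        ((\<lambda>n. (1 / d (p n) (q n)) *\<^sub>R (f (p n) - f (q n))) \<longlonglongrightarrow> y) \<and>
        norm y = lipnorm M d f)"

definition NA :: "'a set \<Rightarrow> ('a \<Rightarrow> 'a \<Rightarrow> real) \<Rightarrow> 'a \<Rightarrow> ('a \<Rightarrow> 'b::real_normed_vector) set" where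
  "NA M d z = {f \<in> Lip0 M d z. \<exists>y. attains_toward M d f y}"

definition dense_in_Lip0 :: "'a set \<Rightarrow> ('a \<Rightarrow> 'a \<Rightarrow> real) \<Rightarrow> 'a \<Rightarrow> ('a \<Rightarrow> 'b::real_normed_vector) set \<Rightarrow> bool" where
  "dense_in_Lip0 M d z S \<longleftrightarrow>
     (\<forall>f\<in>Lip0 M d z. \<forall>e>0. \<exists>g\<in>S. lipnorm M d (\<lambda>x. f x - g x) < e)"

text \<open>Metric sum of the family (M i, d i, z i), i in I: the base point is None,
a non-base point x of M i is Some (i, x).\<close>
definition msum_carrier :: "'i set \<Rightarrow> ('i \<Rightarrow> 'a set) \<Rightarrow> ('i \<Rightarrow> 'a) \<Rightarrow> ('i \<times> 'a) option set" where
  "msum_carrier I M z = insert None {Some (i, x) | i x. i \<in> I \<and> x \<in> M i \<and> x \<noteq> z i}"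

definition msum_dist :: "('i \<Rightarrow> 'a \<Rightarrow> 'a \<Rightarrow> real) \<Rightarrow> ('i \<Rightarrow> 'a) \<Rightarrow>
    ('i \<times> 'a) option \<Rightarrow> ('i \<times> 'a) option \<Rightarrow> real" where
  "msum_dist d z p q = (case p of
      None \<Rightarrow> (case q of None \<Rightarrow> 0 | Some (j, y) \<Rightarrow> d j (z j) y)
    | Some (i, x) \<Rightarrow> (case q of None \<Rightarrow> d i x (z i)
        | Some (j, y) \<Rightarrow> (if i = j then d i x y else d i x (z i) + d j (z j) y)))"

end

theory Submission
  imports Defs
begin


definition lipb :: "'a set \<Rightarrow> ('a \<Rightarrow> 'a \<Rightarrow> real) \<Rightarrow> ('a \<Rightarrow> 'b::real_normed_vector) \<Rightarrow> real \<Rightarrow> bool" where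
  "lipb M d f C \<longleftrightarrow> (\<forall>p\<in>M. \<forall>q\<in>M. norm (f p - f q) \<le> C * d p q)"

lemma Lip0_lipb: "f \<in> Lip0 M d z \<Longrightarrow> \<exists>C. lipb M d f C"
  by (auto simp: Lip0_def lipb_def)

lemma lipnorm_le:
  assumes pos: "\<forall>p\<in>M. \<forall>q\<in>M. p \<noteq> q \<longrightarrow> d p q > 0"
    and two: "p0 \<in> M" "q0 \<in> M" "p0 \<noteq> q0" and L: "lipb M d f C"
  shows "lipnorm M d f \<le> C"
  unfolding lipnorm_def
proof (rule cSup_least)
  show "{norm (f p - f q) / d p q |p q. p \<in> M \<and> q \<in> M \<and> p \<noteq> q} \<noteq> {}" using two by blast
  fix x assume "x \<in> {norm (f p - f q) / d p q |p q. p \<in> M \<and> q \<in> M \<and> p \<noteq> q}"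
  then obtain p q where "x = norm (f p - f q) / d p q" "p \<in> M" "q \<in> M" "p \<noteq> q" by blast
  then show "x \<le> C" using pos L by (auto simp: lipb_def pos_divide_le_eq)
qed

lemma lipnorm_ge:
  assumes pos: "\<forall>p\<in>M. \<forall>q\<in>M. p \<noteq> q \<longrightarrow> d p q > 0"
    and zer: "\<forall>p\<in>M. d p p = 0" and L: "lipb M d f C" and pq: "p \<in> M" "q \<in> M"
  shows "norm (f p - f q) \<le> lipnorm M d f * d p q"
proof (cases "p = q")
  case True then show ?thesis using zer pq by simp
next
  case False
  have bdd: "bdd_above {norm (f p - f q) / d p q |p q. p \<in> M \<and> q \<in> M \<and> p \<noteq> q}"
  proof (rule bdd_aboveI)
    fix x assume "x \<in> {norm (f p - f q) / d p q |p q. p \<in> M \<and> q \<in> M \<and> p \<noteq> q}"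
    then obtain p q where "x = norm (f p - f q) / d p q" "p \<in> M" "q \<in> M" "p \<noteq> q" by blast
    then show "x \<le> C" using pos L by (auto simp: lipb_def pos_divide_le_eq)
  qed
  have "norm (f p - f q) / d p q \<le> lipnorm M d f"
    unfolding lipnorm_def by (rule cSup_upper[OF _ bdd]) (use pq False in blast)
  then show ?thesis using pos pq False by (auto simp: pos_divide_le_eq)
qed

lemma lipnorm_nonneg:
  assumes pos: "\<forall>p\<in>M. \<forall>q\<in>M. p \<noteq> q \<longrightarrow> d p q > 0"
    and zer: "\<forall>p\<in>M. d p p = 0" and two: "p0 \<in> M" "q0 \<in> M" "p0 \<noteq> q0" and L: "lipb M d f C"
  shows "lipnorm M d f \<ge> 0"
proof -
  have "0 \<le> lipnorm M d f * d p0 q0"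
    using lipnorm_ge[OF pos zer L two(1,2)] norm_ge_zero order_trans by blast
  moreover have "d p0 q0 > 0" using pos two by auto
  ultimately show ?thesis by (simp add: zero_le_mult_iff)
qed

lemma quot_le:
  assumes "norm (f p - f q) \<le> K * d p q" "d p q > 0"
  shows "norm ((1 / d p q) *\<^sub>R (f p - f q)) \<le> K"
  using assms by (simp add: divide_le_eq mult.commute)

lemma vec_id:
  fixes a b :: "'b::real_normed_vector"
  assumes s: "s > 0" and t: "t > 0"
  shows "(1 / (s + t)) *\<^sub>R (a + b) = (s / (s + t)) *\<^sub>R ((1 / s) *\<^sub>R a) + (1 - s / (s + t)) *\<^sub>R ((1 / t) *\<^sub>R b)"
proof -
  have 1: "s / (s + t) * (1 / s) = 1 / (s + t)" using s t by (simp add: field_simps)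
  have 2: "(1 - s / (s + t)) * (1 / t) = 1 / (s + t)" using s t by (simp add: field_simps)
  show ?thesis by (simp only: scaleR_scaleR 1 2 scaleR_add_right)
qed

lemma convex_lemma:
  fixes a b :: "'b::real_normed_vector"
  assumes v: "v = l *\<^sub>R a + (1 - l) *\<^sub>R b" and l: "0 \<le> l" "l \<le> 1"
    and a: "norm a \<le> e" and b: "norm b \<le> K" and eK: "e < K"
  shows "norm (v - b) \<le> ((e + K) / (K - e)) * (K - norm v)"
proof -
  have vb: "v - b = l *\<^sub>R (a - b)" using v by (simp add: algebra_simps)
  have "norm (a - b) \<le> e + K" using a b norm_triangle_ineq4[of a b] by linarith
  hence n1: "norm (v - b) \<le> l * (e + K)" using vb l by (simp add: mult_left_mono)
  have "norm v \<le> norm (l *\<^sub>R a) + norm ((1 - l) *\<^sub>R b)" using v norm_triangle_ineq by metis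
  also have "\<dots> \<le> l * e + (1 - l) * K" using l a b by (simp add: mult_left_mono add_mono)
  finally have "l * (K - e) \<le> K - norm v" by (simp add: algebra_simps)
  hence "l \<le> (K - norm v) / (K - e)" using eK by (simp add: pos_le_divide_eq)
  hence "l * (e + K) \<le> (K - norm v) / (K - e) * (e + K)"
    using a eK norm_ge_zero[of a] by (intro mult_right_mono) linarith+
  thus ?thesis using n1 by (simp add: mult.commute)
qed



definition emb :: "('i \<Rightarrow> 'a) \<Rightarrow> 'i \<Rightarrow> 'a \<Rightarrow> ('i \<times> 'a) option" where
  "emb z i x = (if x = z i then None else Some (i, x))"

locale msumloc =
  fixes I :: "'i set" and M :: "'i \<Rightarrow> 'a set" and d :: "'i \<Rightarrow> 'a \<Rightarrow> 'a \<Rightarrow> real"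
    and z :: "'i \<Rightarrow> 'a"
  assumes metric: "\<And>i. i \<in> I \<Longrightarrow> Metric_space (M i) (d i)"
    and base: "\<And>i. i \<in> I \<Longrightarrow> z i \<in> M i"
    and nontriv: "\<And>i. i \<in> I \<Longrightarrow> M i \<noteq> {z i}"
    and Ine: "I \<noteq> {}"
begin

lemma d_pos: "i \<in> I \<Longrightarrow> x \<in> M i \<Longrightarrow> y \<in> M i \<Longrightarrow> x \<noteq> y \<Longrightarrow> d i x y > 0"
  by (rule Metric_space.mdist_pos_less[OF metric])

lemma d_zero: "i \<in> I \<Longrightarrow> x \<in> M i \<Longrightarrow> d i x x = 0"
  by (rule Metric_space.mdist_zero[OF metric])

lemma d_nonneg: "i \<in> I \<Longrightarrow> d i x y \<ge> 0"
  by (rule Metric_space.nonneg[OF metric])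

lemma other_pt: "i \<in> I \<Longrightarrow> \<exists>x\<in>M i. x \<noteq> z i"
  using nontriv base by blast

lemma pos_i: "i \<in> I \<Longrightarrow> \<forall>p\<in>M i. \<forall>q\<in>M i. p \<noteq> q \<longrightarrow> d i p q > 0"
  using d_pos by blast

lemma zer_i: "i \<in> I \<Longrightarrow> \<forall>p\<in>M i. d i p p = 0"
  using d_zero by blast

lemma emb_in: "i \<in> I \<Longrightarrow> x \<in> M i \<Longrightarrow> emb z i x \<in> msum_carrier I M z"
  by (auto simp: emb_def msum_carrier_def)

lemma D_emb: "i \<in> I \<Longrightarrow> x \<in> M i \<Longrightarrow> y \<in> M i \<Longrightarrow> msum_dist d z (emb z i x) (emb z i y) = d i x y"
  using base d_zero by (auto simp: emb_def msum_dist_def)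

lemma emb_inj: "x \<noteq> y \<Longrightarrow> emb z i x \<noteq> emb z i y"
  by (auto simp: emb_def)

lemma D_pos: "\<forall>p\<in>msum_carrier I M z. \<forall>q\<in>msum_carrier I M z. p \<noteq> q \<longrightarrow> msum_dist d z p q > 0"
proof (intro ballI impI)
  fix p q assume p: "p \<in> msum_carrier I M z" and q: "q \<in> msum_carrier I M z" and pq: "p \<noteq> q"
  have pos1: "i \<in> I \<Longrightarrow> x \<in> M i \<Longrightarrow> x \<noteq> z i \<Longrightarrow> d i x (z i) > 0 \<and> d i (z i) x > 0" for i x
    using d_pos[of i x "z i"] base[of i] Metric_space.commute[OF metric, of i x "z i"] by auto
  show "msum_dist d z p q > 0"
  proof (cases p)
    case None
    then obtain j y where "q = Some (j, y)" "j \<in> I" "y \<in> M j" "y \<noteq> z j"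
      using q pq by (auto simp: msum_carrier_def)
    then show ?thesis using None pos1[of j y] by (simp add: msum_dist_def)
  next
    case (Some a)
    then obtain i x where a: "p = Some (i, x)" "i \<in> I" "x \<in> M i" "x \<noteq> z i"
      using p by (auto simp: msum_carrier_def)
    show ?thesis
    proof (cases q)
      case None then show ?thesis using a pos1[of i x] by (simp add: msum_dist_def)
    next
      case (Some b)
      then obtain j y where b: "q = Some (j, y)" "j \<in> I" "y \<in> M j" "y \<noteq> z j"
        using q by (auto simp: msum_carrier_def)
      show ?thesis
      proof (cases "i = j")
        case True then show ?thesis using a b pq d_pos[of i x y] by (simp add: msum_dist_def)
      next
        case False then show ?thesis using a b pos1[of i x] pos1[of j y] by (simp add: msum_dist_def)
      qed
    qed
  qed
qed

lemma D_zer: "\<forall>p\<in>msum_carrier I M z. msum_dist d z p p = 0"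
  using d_zero by (auto simp: msum_carrier_def msum_dist_def)

lemma D_two: "\<exists>p q. p \<in> msum_carrier I M z \<and> q \<in> msum_carrier I M z \<and> p \<noteq> q"
proof -
  obtain i where i: "i \<in> I" using Ine by blast
  then obtain x where "x \<in> M i" "x \<noteq> z i" using other_pt by blast
  then show ?thesis using i by (intro exI[of _ None] exI[of _ "Some (i,x)"]) (auto simp: msum_carrier_def)
qed

lemma M_two: "i \<in> I \<Longrightarrow> \<exists>p q. p \<in> M i \<and> q \<in> M i \<and> p \<noteq> q"
  using other_pt base by blast

lemma msum_lip:
  fixes H :: "('i \<times> 'a) option \<Rightarrow> 'b::real_normed_vector"
  assumes H0: "H None = 0"
    and Hc: "\<And>j x y. j \<in> I \<Longrightarrow> x \<in> M j \<Longrightarrow> y \<in> M j \<Longrightarrow>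
       norm (H (emb z j x) - H (emb z j y)) \<le> C * d j x y"
  shows "lipb (msum_carrier I M z) (msum_dist d z) H C"
  unfolding lipb_def
proof (intro ballI)
  fix p q assume p: "p \<in> msum_carrier I M z" and q: "q \<in> msum_carrier I M z"
  have eb: "emb z j (z j) = None" for j by (simp add: emb_def)
  have es: "x \<noteq> z j \<Longrightarrow> emb z j x = Some (j, x)" for j x by (simp add: emb_def)
  show "norm (H p - H q) \<le> C * msum_dist d z p q"
  proof (cases p)
    case None
    show ?thesis
    proof (cases q)
      case None then show ?thesis using \<open>p = None\<close> by (simp add: msum_dist_def)
    next
      case (Some b)
      then obtain j y where b: "q = Some (j, y)" "j \<in> I" "y \<in> M j" "y \<noteq> z j"
        using q by (auto simp: msum_carrier_def)
      show ?thesis using Hc[of j "z j" y] b base[of j] eb es \<open>p = None\<close> by (simp add: msum_dist_def)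
    qed
  next
    case (Some a)
    then obtain i x where a: "p = Some (i, x)" "i \<in> I" "x \<in> M i" "x \<noteq> z i"
      using p by (auto simp: msum_carrier_def)
    show ?thesis
    proof (cases q)
      case None
      show ?thesis using Hc[of i x "z i"] a base[of i] eb es \<open>q = None\<close> by (simp add: msum_dist_def)
    next
      case (Some b)
      then obtain j y where b: "q = Some (j, y)" "j \<in> I" "y \<in> M j" "y \<noteq> z j"
        using q by (auto simp: msum_carrier_def)
      show ?thesis
      proof (cases "i = j")
        case True
        then show ?thesis using Hc[of i x y] a b es by (simp add: msum_dist_def)
      next
        case False
        have "norm (H p - H q) \<le> norm (H p - H None) + norm (H None - H q)"
          by (rule norm_diff_triangle_le[OF order_refl order_refl])
        also have "\<dots> \<le> C * d i x (z i) + C * d j (z j) y"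
          using Hc[of i x "z i"] Hc[of j "z j" y] a b base eb es by (intro add_mono) auto
        finally show ?thesis using a b False by (simp add: msum_dist_def distrib_left)
      qed
    qed
  qed
qed

end



context msumloc
begin

abbreviation "CC \<equiv> msum_carrier I M z"
abbreviation "DD \<equiv> msum_dist d z"

lemma dir_ab:
  assumes A: "\<forall>i\<in>I. dense_in_Lip0 (M i) (d i) (z i) (NA (M i) (d i) (z i) :: ('a \<Rightarrow> 'b::real_normed_vector) set)"
  shows "dense_in_Lip0 CC DD None (NA CC DD None :: (('i \<times> 'a) option \<Rightarrow> 'b) set)"
  unfolding dense_in_Lip0_def
proof (intro ballI allI impI)
  fix F :: "('i \<times> 'a) option \<Rightarrow> 'b" and e :: real
  assume F: "F \<in> Lip0 CC DD None" and e: "e > 0"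
  obtain CF where CF: "lipb CC DD F CF" using Lip0_lipb[OF F] by blast
  obtain p0 q0 where two: "p0 \<in> CC" "q0 \<in> CC" "p0 \<noteq> q0" using D_two by blast
  define L where "L = lipnorm CC DD F"
  have FL: "\<And>p q. p \<in> CC \<Longrightarrow> q \<in> CC \<Longrightarrow> norm (F p - F q) \<le> L * DD p q"
    unfolding L_def by (rule lipnorm_ge[OF D_pos D_zer CF])
  have L0: "L \<ge> 0" unfolding L_def by (rule lipnorm_nonneg[OF D_pos D_zer two CF])
  have F0: "F None = 0" using F by (simp add: Lip0_def)
  have Fout: "\<And>p. p \<notin> CC \<Longrightarrow> F p = 0" using F by (simp add: Lip0_def)
  show "\<exists>G\<in>NA CC DD None. lipnorm CC DD (\<lambda>x. F x - G x) < e"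
  proof (cases "L = 0")
    case True
    have Fz: "F p - F q = 0" if "p \<in> CC" "q \<in> CC" for p q
      using FL[OF that] True by simp
    have "attains_toward CC DD F 0"
      unfolding attains_toward_def
      by (rule exI[of _ "\<lambda>n. p0"], rule exI[of _ "\<lambda>n. q0"]) (use two Fz[OF two(1,2)] True in \<open>simp add: L_def\<close>)
    hence "F \<in> NA CC DD None" using F by (auto simp: NA_def)
    moreover have "lipnorm CC DD (\<lambda>x. F x - F x) < e"
    proof -
      have "lipnorm CC DD (\<lambda>x. F x - F x) \<le> 0"
        by (rule lipnorm_le[OF D_pos two]) (simp add: lipb_def)
      thus ?thesis using e by linarith
    qed
    ultimately show ?thesis by blast
  next
    case False
    hence Lp: "L > 0" using L0 by simp
    define \<delta> where "\<delta> = min (e/3) (L/4)"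
    have dp: "\<delta> > 0" using e Lp by (simp add: \<delta>_def)
    define f where "f i x = (if x \<in> M i then F (emb z i x) else 0)" for i x
    have fL: "norm (f i x - f i y) \<le> L * d i x y" if "i \<in> I" "x \<in> M i" "y \<in> M i" for i x y
      using FL[OF emb_in emb_in, of i x i y] D_emb[of i x y] that by (simp add: f_def)
    have fLip: "f i \<in> Lip0 (M i) (d i) (z i)" if i: "i \<in> I" for i
    proof -
      have "f i (z i) = 0" using base[OF i] F0 by (simp add: f_def emb_def)
      moreover have "\<forall>x. x \<notin> M i \<longrightarrow> f i x = 0" by (simp add: f_def)
      moreover have "\<exists>C. \<forall>p\<in>M i. \<forall>q\<in>M i. norm (f i p - f i q) \<le> C * d i p q"
        using fL[OF i] by blast
      ultimately show ?thesis by (simp add: Lip0_def)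
    qed
    obtain i0 where i0: "i0 \<in> I" "lipnorm (M i0) (d i0) (f i0) > L - \<delta>"
    proof (rule ccontr)
      assume "\<not> thesis"
      hence le: "\<And>i. i \<in> I \<Longrightarrow> lipnorm (M i) (d i) (f i) \<le> L - \<delta>" using that by (meson not_less)
      have "lipb CC DD F (L - \<delta>)"
      proof (rule msum_lip[where H=F])
        show "F None = 0" by (rule F0)
        fix j x y assume j: "j \<in> I" and xy: "x \<in> M j" "y \<in> M j"
        obtain Cj where Cj: "lipb (M j) (d j) (f j) Cj" using Lip0_lipb[OF fLip[OF j]] by blast
        have "norm (f j x - f j y) \<le> lipnorm (M j) (d j) (f j) * d j x y"
          by (rule lipnorm_ge[OF pos_i[OF j] zer_i[OF j] Cj xy])
        also have "\<dots> \<le> (L - \<delta>) * d j x y"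
          using le[OF j] d_nonneg[OF j] by (intro mult_right_mono) auto
        finally show "norm (F (emb z j x) - F (emb z j y)) \<le> (L - \<delta>) * d j x y"
          using xy by (simp add: f_def)
      qed
      hence "L \<le> L - \<delta>" unfolding L_def by (rule lipnorm_le[OF D_pos two])
      thus False using dp by simp
    qed
    obtain a0 b0 where ab0: "a0 \<in> M i0" "b0 \<in> M i0" "a0 \<noteq> b0" using M_two[OF i0(1)] by blast
    obtain g where gNA: "g \<in> NA (M i0) (d i0) (z i0)"
      and fg: "lipnorm (M i0) (d i0) (\<lambda>x. f i0 x - g x) < \<delta>"
    proof -
      have "dense_in_Lip0 (M i0) (d i0) (z i0) (NA (M i0) (d i0) (z i0) :: ('a \<Rightarrow> 'b) set)"
        using A i0(1) by blast
      hence "\<forall>f\<in>Lip0 (M i0) (d i0) (z i0). \<forall>e>0. \<exists>g\<in>(NA (M i0) (d i0) (z i0) :: ('a \<Rightarrow> 'b) set). lipnorm (M i0) (d i0) (\<lambda>x. f x - g x) < e"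
        unfolding dense_in_Lip0_def .
      from this[rule_format, OF fLip[OF i0(1)] dp] show ?thesis using that by blast
    qed
    have gLip: "g \<in> Lip0 (M i0) (d i0) (z i0)" using gNA by (simp add: NA_def)
    obtain Cg where Cg: "lipb (M i0) (d i0) g Cg" using Lip0_lipb[OF gLip] by blast
    define K where "K = lipnorm (M i0) (d i0) g"
    have gK: "norm (g x - g y) \<le> K * d i0 x y" if "x \<in> M i0" "y \<in> M i0" for x y
      unfolding K_def by (rule lipnorm_ge[OF pos_i[OF i0(1)] zer_i[OF i0(1)] Cg that])
    have gz: "g (z i0) = 0" and gout: "\<And>x. x \<notin> M i0 \<Longrightarrow> g x = 0" using gLip by (auto simp: Lip0_def)
    have fgb: "lipb (M i0) (d i0) (\<lambda>x. f i0 x - g x) (L + Cg)"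
      unfolding lipb_def
    proof (intro ballI)
      fix x y assume xy: "x \<in> M i0" "y \<in> M i0"
      have "norm ((f i0 x - g x) - (f i0 y - g y)) \<le> norm (f i0 x - f i0 y) + norm (g x - g y)"
      proof -
        have "(f i0 x - g x) - (f i0 y - g y) = (f i0 x - f i0 y) - (g x - g y)" by (simp add: algebra_simps)
        thus ?thesis using norm_triangle_ineq4[of "f i0 x - f i0 y" "g x - g y"] by metis
      qed
      also have "\<dots> \<le> L * d i0 x y + Cg * d i0 x y"
        using fL[OF i0(1) xy] Cg xy by (intro add_mono) (auto simp: lipb_def)
      finally show "norm ((f i0 x - g x) - (f i0 y - g y)) \<le> (L + Cg) * d i0 x y"
        by (simp add: distrib_right)
    qed
    have fgd: "norm ((f i0 x - g x) - (f i0 y - g y)) \<le> \<delta> * d i0 x y" if xy: "x \<in> M i0" "y \<in> M i0" for x y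
    proof -
      have "norm ((f i0 x - g x) - (f i0 y - g y)) \<le> lipnorm (M i0) (d i0) (\<lambda>x. f i0 x - g x) * d i0 x y"
        by (rule lipnorm_ge[OF pos_i[OF i0(1)] zer_i[OF i0(1)] fgb xy])
      also have "\<dots> \<le> \<delta> * d i0 x y" using fg d_nonneg[OF i0(1)] by (intro mult_right_mono) auto
      finally show ?thesis .
    qed
    have KL: "K > L - 2 * \<delta>"
    proof -
      have "lipnorm (M i0) (d i0) (f i0) \<le> \<delta> + K"
      proof (rule lipnorm_le[OF pos_i[OF i0(1)] ab0], unfold lipb_def, intro ballI)
        fix x y assume xy: "x \<in> M i0" "y \<in> M i0"
        have "norm (f i0 x - f i0 y) \<le> norm ((f i0 x - g x) - (f i0 y - g y)) + norm (g x - g y)"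
          using norm_triangle_ineq[of "(f i0 x - g x) - (f i0 y - g y)" "g x - g y"] by simp
        also have "\<dots> \<le> \<delta> * d i0 x y + K * d i0 x y" using fgd[OF xy] gK[OF xy] by (rule add_mono)
        finally show "norm (f i0 x - f i0 y) \<le> (\<delta> + K) * d i0 x y" by (simp add: distrib_right)
      qed
      thus ?thesis using i0(2) by linarith
    qed
    define c where "c = 1 - 2 * \<delta> / L"
    have c0: "c > 0" using Lp dp unfolding c_def \<delta>_def by (simp add: field_simps)
    have cL: "c * L = L - 2 * \<delta>" unfolding c_def using Lp by (simp add: field_simps)
    have c1L: "(1 - c) * L = 2 * \<delta>" unfolding c_def using Lp by (simp add: field_simps)
    define G where "G p = (case p of None \<Rightarrow> 0 | Some (j, x) \<Rightarrow> if j = i0 then g x else c *\<^sub>R F p)" for p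
    have G0: "G None = 0" by (simp add: G_def)
    have Gemb: "G (emb z j x) = (if j = i0 then g x else c *\<^sub>R F (emb z j x))" if "j \<in> I" "x \<in> M j" for j x
      using gz F0 by (auto simp: G_def emb_def)
    have GK: "lipb CC DD G K"
    proof (rule msum_lip[where H=G])
      show "G None = 0" by (rule G0)
      fix j x y assume j: "j \<in> I" and xy: "x \<in> M j" "y \<in> M j"
      show "norm (G (emb z j x) - G (emb z j y)) \<le> K * d j x y"
      proof (cases "j = i0")
        case True then show ?thesis using Gemb[OF j xy(1)] Gemb[OF j xy(2)] gK xy by simp
      next
        case False
        have "norm (G (emb z j x) - G (emb z j y)) = c * norm (F (emb z j x) - F (emb z j y))"
          using Gemb[OF j xy(1)] Gemb[OF j xy(2)] False c0
          by (simp add: scaleR_diff_right[symmetric])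
        also have "\<dots> \<le> c * (L * d j x y)"
          using FL[OF emb_in[OF j xy(1)] emb_in[OF j xy(2)]] D_emb[OF j xy] c0 by simp
        also have "\<dots> \<le> K * d j x y" using cL KL d_nonneg[OF j] dp
          by (simp add: mult.assoc[symmetric] mult_right_mono)
        finally show ?thesis .
      qed
    qed
    have FG: "lipb CC DD (\<lambda>p. F p - G p) (2 * \<delta>)"
    proof (rule msum_lip)
      show "F None - G None = 0" using F0 G0 by simp
      fix j x y assume j: "j \<in> I" and xy: "x \<in> M j" "y \<in> M j"
      show "norm ((F (emb z j x) - G (emb z j x)) - (F (emb z j y) - G (emb z j y))) \<le> 2 * \<delta> * d j x y"
      proof (cases "j = i0")
        case True
        have "norm ((F (emb z j x) - G (emb z j x)) - (F (emb z j y) - G (emb z j y))) \<le> \<delta> * d j x y"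
          using Gemb[OF j xy(1)] Gemb[OF j xy(2)] fgd xy True by (simp add: f_def)
        also have "\<dots> \<le> 2 * \<delta> * d j x y" using dp d_nonneg[OF j] by (simp add: mult_right_mono)
        finally show ?thesis .
      next
        case False
        have "(F (emb z j x) - G (emb z j x)) - (F (emb z j y) - G (emb z j y))
              = (1 - c) *\<^sub>R (F (emb z j x) - F (emb z j y))"
          using Gemb[OF j xy(1)] Gemb[OF j xy(2)] False by (simp add: algebra_simps)
        hence "norm ((F (emb z j x) - G (emb z j x)) - (F (emb z j y) - G (emb z j y)))
              = \<bar>1 - c\<bar> * norm (F (emb z j x) - F (emb z j y))" by simp
        also have "\<dots> \<le> \<bar>1 - c\<bar> * (L * d j x y)"
          using FL[OF emb_in[OF j xy(1)] emb_in[OF j xy(2)]] D_emb[OF j xy] by (simp add: mult_left_mono)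
        also have "\<dots> = 2 * \<delta> * d j x y"
        proof -
          have "1 - c \<ge> 0" using Lp dp unfolding c_def by simp
          thus ?thesis using c1L by (simp add: mult.assoc[symmetric])
        qed
        finally show ?thesis .
      qed
    qed
    have GLip: "G \<in> Lip0 CC DD None"
    proof -
      have "G p = 0" if "p \<notin> CC" for p
      proof (cases p)
        case None then show ?thesis by (simp add: G0)
      next
        case (Some a)
        then obtain j x where a: "p = Some (j, x)" by (cases a) auto
        show ?thesis
        proof (cases "j = i0")
          case True
          then have "x \<notin> M i0 \<or> x = z i0" using that a i0(1) by (auto simp: msum_carrier_def)
          then show ?thesis using a True gz gout by (auto simp: G_def)
        next
          case False then show ?thesis using a Fout[OF that] by (simp add: G_def)
        qed
      qed
      moreover have "\<exists>C. \<forall>p\<in>CC. \<forall>q\<in>CC. norm (G p - G q) \<le> C * DD p q"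
        using GK unfolding lipb_def by blast
      ultimately show ?thesis using G0 by (simp add: Lip0_def)
    qed
    have normG: "lipnorm CC DD G = K"
    proof (rule antisym)
      show "lipnorm CC DD G \<le> K" by (rule lipnorm_le[OF D_pos two GK])
      show "K \<le> lipnorm CC DD G" unfolding K_def
      proof (rule lipnorm_le[OF pos_i[OF i0(1)] ab0], unfold lipb_def, intro ballI)
        fix x y assume xy: "x \<in> M i0" "y \<in> M i0"
        have "norm (G (emb z i0 x) - G (emb z i0 y)) \<le> lipnorm CC DD G * DD (emb z i0 x) (emb z i0 y)"
          by (rule lipnorm_ge[OF D_pos D_zer GK emb_in[OF i0(1) xy(1)] emb_in[OF i0(1) xy(2)]])
        thus "norm (g x - g y) \<le> lipnorm CC DD G * d i0 x y"
          using Gemb[OF i0(1) xy(1)] Gemb[OF i0(1) xy(2)] D_emb[OF i0(1) xy] by simp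
      qed
    qed
    have "G \<in> NA CC DD None"
    proof -
      obtain y p q where pq: "\<forall>n. p n \<in> M i0 \<and> q n \<in> M i0 \<and> p n \<noteq> q n"
        and lim: "(\<lambda>n. (1 / d i0 (p n) (q n)) *\<^sub>R (g (p n) - g (q n))) \<longlonglongrightarrow> y"
        and ny: "norm y = K"
      proof -
        obtain y where "attains_toward (M i0) (d i0) g y" using gNA by (auto simp: NA_def)
        then obtain p q where "\<forall>n. p n \<in> M i0 \<and> q n \<in> M i0 \<and> p n \<noteq> q n"
          "(\<lambda>n. (1 / d i0 (p n) (q n)) *\<^sub>R (g (p n) - g (q n))) \<longlonglongrightarrow> y"
          "norm y = lipnorm (M i0) (d i0) g" unfolding attains_toward_def by blast
        thus ?thesis using that unfolding K_def by blast
      qed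
      have "attains_toward CC DD G y"
        unfolding attains_toward_def
      proof (intro exI conjI)
        show "\<forall>n. emb z i0 (p n) \<in> CC \<and> emb z i0 (q n) \<in> CC \<and> emb z i0 (p n) \<noteq> emb z i0 (q n)"
          using pq emb_in[OF i0(1)] emb_inj by metis
        show "(\<lambda>n. (1 / DD (emb z i0 (p n)) (emb z i0 (q n))) *\<^sub>R (G (emb z i0 (p n)) - G (emb z i0 (q n)))) \<longlonglongrightarrow> y"
          using lim pq Gemb[OF i0(1)] D_emb[OF i0(1)] by simp
        show "norm y = lipnorm CC DD G" using ny normG by simp
      qed
      thus ?thesis using GLip by (auto simp: NA_def)
    qed
    moreover have "lipnorm CC DD (\<lambda>x. F x - G x) < e"
    proof -
      have "lipnorm CC DD (\<lambda>x. F x - G x) \<le> 2 * \<delta>" by (rule lipnorm_le[OF D_pos two FG])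
      also have "\<dots> < e" using e unfolding \<delta>_def by linarith
      finally show ?thesis .
    qed
    ultimately show ?thesis by blast
  qed
qed

end



context msumloc
begin

lemma dir_ba:
  assumes B: "dense_in_Lip0 CC DD None (NA CC DD None :: (('i \<times> 'a) option \<Rightarrow> 'b::real_normed_vector) set)"
    and i: "i \<in> I"
  shows "dense_in_Lip0 (M i) (d i) (z i) (NA (M i) (d i) (z i) :: ('a \<Rightarrow> 'b) set)"
  unfolding dense_in_Lip0_def
proof (intro ballI allI impI)
  fix f :: "'a \<Rightarrow> 'b" and e :: real
  assume f: "f \<in> Lip0 (M i) (d i) (z i)" and e: "e > 0"
  obtain Cf where Cf: "lipb (M i) (d i) f Cf" using Lip0_lipb[OF f] by blast
  obtain a0 b0 where ab0: "a0 \<in> M i" "b0 \<in> M i" "a0 \<noteq> b0" using M_two[OF i] by blast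
  obtain p0 q0 where two: "p0 \<in> CC" "q0 \<in> CC" "p0 \<noteq> q0" using D_two by blast
  define L where "L = lipnorm (M i) (d i) f"
  have fL: "\<And>x y. x \<in> M i \<Longrightarrow> y \<in> M i \<Longrightarrow> norm (f x - f y) \<le> L * d i x y"
    unfolding L_def by (rule lipnorm_ge[OF pos_i[OF i] zer_i[OF i] Cf])
  have L0: "L \<ge> 0" unfolding L_def by (rule lipnorm_nonneg[OF pos_i[OF i] zer_i[OF i] ab0 Cf])
  have fz: "f (z i) = 0" using f by (simp add: Lip0_def)
  have fout: "\<And>x. x \<notin> M i \<Longrightarrow> f x = 0" using f by (simp add: Lip0_def)
  show "\<exists>g\<in>NA (M i) (d i) (z i). lipnorm (M i) (d i) (\<lambda>x. f x - g x) < e"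
  proof (cases "L = 0")
    case True
    have fzz: "f p - f q = 0" if "p \<in> M i" "q \<in> M i" for p q
      using fL[OF that] True by simp
    have "attains_toward (M i) (d i) f 0"
      unfolding attains_toward_def
      by (rule exI[of _ "\<lambda>n. a0"], rule exI[of _ "\<lambda>n. b0"]) (use ab0 fzz[OF ab0(1,2)] True in \<open>simp add: L_def\<close>)
    hence "f \<in> NA (M i) (d i) (z i)" using f by (auto simp: NA_def)
    moreover have "lipnorm (M i) (d i) (\<lambda>x. f x - f x) < e"
    proof -
      have "lipnorm (M i) (d i) (\<lambda>x. f x - f x) \<le> 0"
        by (rule lipnorm_le[OF pos_i[OF i] ab0]) (simp add: lipb_def)
      thus ?thesis using e by linarith
    qed
    ultimately show ?thesis by blast
  next
    case False
    hence Lp: "L > 0" using L0 by simp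
    define e' where "e' = min e (L/3)"
    have e'p: "e' > 0" using e Lp by (simp add: e'_def)
    define F where "F p = (case p of None \<Rightarrow> 0 | Some (j, x) \<Rightarrow> if j = i then f x else 0)" for p
    have F0: "F None = 0" by (simp add: F_def)
    have Femb: "F (emb z j x) = (if j = i then f x else 0)" if "j \<in> I" "x \<in> M j" for j x
      using fz by (auto simp: F_def emb_def)
    have Fnot: "F P = 0" if "\<forall>w. P \<noteq> Some (i, w)" for P
      using that by (cases P) (auto simp: F_def split: prod.splits)
    have FLb: "lipb CC DD F L"
    proof (rule msum_lip[where H=F])
      show "F None = 0" by (rule F0)
      fix j x y assume j: "j \<in> I" and xy: "x \<in> M j" "y \<in> M j"
      show "norm (F (emb z j x) - F (emb z j y)) \<le> L * d j x y"
        using Femb[OF j xy(1)] Femb[OF j xy(2)] fL[of x y] xy L0 d_nonneg[OF j] by (cases "j = i") auto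
    qed
    have FLip: "F \<in> Lip0 CC DD None"
    proof -
      have "F p = 0" if "p \<notin> CC" for p
      proof (cases p)
        case None then show ?thesis by (simp add: F0)
      next
        case (Some a)
        then obtain j x where a: "p = Some (j, x)" by (cases a) auto
        show ?thesis
        proof (cases "j = i")
          case True
          then have "x \<notin> M i \<or> x = z i" using that a i by (auto simp: msum_carrier_def)
          then show ?thesis using a True fz fout by (auto simp: F_def)
        next
          case False then show ?thesis using a by (simp add: F_def)
        qed
      qed
      moreover have "\<exists>C. \<forall>p\<in>CC. \<forall>q\<in>CC. norm (F p - F q) \<le> C * DD p q"
        using FLb unfolding lipb_def by blast
      ultimately show ?thesis using F0 by (simp add: Lip0_def)
    qed
    obtain G where GNA: "G \<in> NA CC DD None" and FG: "lipnorm CC DD (\<lambda>x. F x - G x) < e'"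
    proof -
      have "\<forall>f\<in>Lip0 CC DD None. \<forall>e>0. \<exists>g\<in>(NA CC DD None :: (('i \<times> 'a) option \<Rightarrow> 'b) set). lipnorm CC DD (\<lambda>x. f x - g x) < e"
        using B unfolding dense_in_Lip0_def .
      from this[rule_format, OF FLip e'p] show ?thesis using that by blast
    qed
    have GLip: "G \<in> Lip0 CC DD None" using GNA by (simp add: NA_def)
    obtain CG where CG: "lipb CC DD G CG" using Lip0_lipb[OF GLip] by blast
    have G0: "G None = 0" using GLip by (simp add: Lip0_def)
    define e2 where "e2 = lipnorm CC DD (\<lambda>x. F x - G x)"
    have FGb: "lipb CC DD (\<lambda>x. F x - G x) (L + CG)"
      unfolding lipb_def
    proof (intro ballI)
      fix x y assume xy: "x \<in> CC" "y \<in> CC"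
      have "norm ((F x - G x) - (F y - G y)) \<le> norm (F x - F y) + norm (G x - G y)"
      proof -
        have "(F x - G x) - (F y - G y) = (F x - F y) - (G x - G y)" by (simp add: algebra_simps)
        thus ?thesis using norm_triangle_ineq4[of "F x - F y" "G x - G y"] by metis
      qed
      also have "\<dots> \<le> L * DD x y + CG * DD x y"
        using FLb CG xy by (intro add_mono) (auto simp: lipb_def)
      finally show "norm ((F x - G x) - (F y - G y)) \<le> (L + CG) * DD x y"
        by (simp add: distrib_right)
    qed
    have FGd: "norm ((F p - G p) - (F q - G q)) \<le> e2 * DD p q" if "p \<in> CC" "q \<in> CC" for p q
      unfolding e2_def by (rule lipnorm_ge[OF D_pos D_zer FGb that])
    have e20: "e2 \<ge> 0" unfolding e2_def by (rule lipnorm_nonneg[OF D_pos D_zer two FGb])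
    define K where "K = lipnorm CC DD G"
    have GK: "norm (G p - G q) \<le> K * DD p q" if "p \<in> CC" "q \<in> CC" for p q
      unfolding K_def by (rule lipnorm_ge[OF D_pos D_zer CG that])
    have KL: "L \<le> e2 + K"
      unfolding L_def
    proof (rule lipnorm_le[OF pos_i[OF i] ab0], unfold lipb_def, intro ballI)
      fix x y assume xy: "x \<in> M i" "y \<in> M i"
      let ?x = "emb z i x" and ?y = "emb z i y"
      have "norm (F ?x - F ?y) \<le> norm ((F ?x - G ?x) - (F ?y - G ?y)) + norm (G ?x - G ?y)"
        using norm_triangle_ineq[of "(F ?x - G ?x) - (F ?y - G ?y)" "G ?x - G ?y"] by simp
      also have "\<dots> \<le> e2 * DD ?x ?y + K * DD ?x ?y"
        using FGd[OF emb_in[OF i xy(1)] emb_in[OF i xy(2)]] GK[OF emb_in[OF i xy(1)] emb_in[OF i xy(2)]]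
        by (rule add_mono)
      finally show "norm (f x - f y) \<le> (e2 + K) * d i x y"
        using Femb[OF i xy(1)] Femb[OF i xy(2)] D_emb[OF i xy] by (simp add: distrib_right)
    qed
    have e2e: "e2 < e'" using FG by (simp add: e2_def)
    have eK: "e2 < K" using KL e2e Lp unfolding e'_def by linarith
    have e2e3: "e2 < e" using e2e unfolding e'_def by linarith
    define g where "g x = (if x \<in> M i then G (emb z i x) else 0)" for x
    have gK: "norm (g x - g y) \<le> K * d i x y" if xy: "x \<in> M i" "y \<in> M i" for x y
      using GK[OF emb_in[OF i xy(1)] emb_in[OF i xy(2)]] D_emb[OF i xy] xy by (simp add: g_def)
    have gz: "g (z i) = 0" using base[OF i] G0 by (simp add: g_def emb_def)
    have gLip: "g \<in> Lip0 (M i) (d i) (z i)"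
    proof -
      have "\<forall>x. x \<notin> M i \<longrightarrow> g x = 0" by (simp add: g_def)
      moreover have "\<exists>C. \<forall>p\<in>M i. \<forall>q\<in>M i. norm (g p - g q) \<le> C * d i p q"
        using gK by blast
      ultimately show ?thesis using gz by (simp add: Lip0_def)
    qed
    have gKb: "lipb (M i) (d i) g K" using gK by (simp add: lipb_def)
    have lgK: "lipnorm (M i) (d i) g \<le> K" by (rule lipnorm_le[OF pos_i[OF i] ab0 gKb])
    have fg: "lipnorm (M i) (d i) (\<lambda>x. f x - g x) \<le> e2"
    proof (rule lipnorm_le[OF pos_i[OF i] ab0], unfold lipb_def, intro ballI)
      fix x y assume xy: "x \<in> M i" "y \<in> M i"
      show "norm ((f x - g x) - (f y - g y)) \<le> e2 * d i x y"
        using FGd[OF emb_in[OF i xy(1)] emb_in[OF i xy(2)]] D_emb[OF i xy]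
          Femb[OF i xy(1)] Femb[OF i xy(2)] xy by (simp add: g_def)
    qed
    have c0: "(e2 + K) / (K - e2) \<ge> 0" using e20 eK by simp
    define c where "c = (e2 + K) / (K - e2)"
    define qG where "qG P Q = (1 / DD P Q) *\<^sub>R (G P - G Q)" for P Q
    define qg where "qg a b = (1 / d i a b) *\<^sub>R (g a - g b)" for a b
    have qGK: "norm (qG P Q) \<le> K" if "P \<in> CC" "Q \<in> CC" "P \<noteq> Q" for P Q
      unfolding qG_def by (rule quot_le[where f=G and d=DD, OF GK[OF that(1,2)]]) (use D_pos that in blast)
    have qgK: "norm (qg a b) \<le> K" if "a \<in> M i" "b \<in> M i" "a \<noteq> b" for a b
      unfolding qg_def by (rule quot_le[where f=g and d="d i", OF gK[OF that(1,2)]]) (use d_pos[OF i] that in blast)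
    have qglg: "norm (qg a b) \<le> lipnorm (M i) (d i) g" if "a \<in> M i" "b \<in> M i" "a \<noteq> b" for a b
      unfolding qg_def by (rule quot_le[where f=g and d="d i", OF lipnorm_ge[OF pos_i[OF i] zer_i[OF i] gKb that(1,2)]]) (use d_pos[OF i] that in blast)
    have qemb: "qg a b = qG (emb z i a) (emb z i b)" if "a \<in> M i" "b \<in> M i" for a b
      using that D_emb[OF i that] by (simp add: qg_def qG_def g_def)
    have Gsmall: "norm (qG P Q) \<le> e2" if "P \<in> CC" "Q \<in> CC" "P \<noteq> Q" "F P = 0" "F Q = 0" for P Q
      unfolding qG_def
      by (rule quot_le[where f=G and d=DD]) (use FGd[OF that(1,2)] that D_pos norm_minus_commute[of "G P" "G Q"] in auto)
    have caseI: "\<exists>a b. a \<in> M i \<and> b \<in> M i \<and> a \<noteq> b \<and> norm (qg a b - qG P Q) \<le> c * (K - norm (qG P Q))"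
      if "P = emb z i a" "Q = emb z i b" "a \<in> M i" "b \<in> M i" "P \<in> CC" "Q \<in> CC" "P \<noteq> Q" for P Q a b
    proof (intro exI conjI)
      show "a \<in> M i" "b \<in> M i" "a \<noteq> b" using that by auto
      have "0 \<le> c * (K - norm (qG P Q))" using qGK[OF that(5-7)] c0 unfolding c_def by (intro mult_nonneg_nonneg) auto
      thus "norm (qg a b - qG P Q) \<le> c * (K - norm (qG P Q))" using qemb[OF that(3,4)] that(1,2) by simp
    qed
    have inCC: "j \<in> I \<and> x \<in> M j \<and> x \<noteq> z j" if "Some (j, x) \<in> CC" for j x
      using that by (auto simp: msum_carrier_def)
    have embS: "emb z j x = Some (j, x)" if "x \<noteq> z j" for j x using that by (simp add: emb_def)
    have embN: "emb z j (z j) = None" for j by (simp add: emb_def)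
    have Gnorm1: "norm (G P) \<le> e2 * DD P None" if "P \<in> CC" "F P = 0" for P
      using FGd[OF that(1), of None] that G0 F0 by (simp add: msum_carrier_def)
    have Gnorm2: "norm (G P) \<le> e2 * DD None P" if "P \<in> CC" "F P = 0" for P
      using FGd[OF _ that(1), of None] that G0 F0 by (simp add: msum_carrier_def)
    have key: "(\<exists>a b. a \<in> M i \<and> b \<in> M i \<and> a \<noteq> b \<and> norm (qg a b - qG P Q) \<le> c * (K - norm (qG P Q)))
               \<or> norm (qG P Q) \<le> e2"
      if PQ: "P \<in> CC" "Q \<in> CC" "P \<noteq> Q" for P Q
    proof (cases P)
      case None
      show ?thesis
      proof (cases Q)
        case None then show ?thesis using \<open>P = None\<close> PQ by simp
      next
        case (Some b)
        then obtain j x where Q: "Q = Some (j, x)" by (cases b) auto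
        show ?thesis
        proof (cases "j = i")
          case True
          then show ?thesis using caseI[of P "z i" Q x] PQ Q None inCC[of j x] embS embN base[OF i] by auto
        next
          case False
          then show ?thesis using Gsmall[OF PQ] None Q F0 Fnot[of Q] by auto
        qed
      qed
    next
      case (Some a)
      then obtain j x where P: "P = Some (j, x)" by (cases a) auto
      have jx: "j \<in> I" "x \<in> M j" "x \<noteq> z j" using inCC[of j x] PQ P by auto
      show ?thesis
      proof (cases Q)
        case None
        show ?thesis
        proof (cases "j = i")
          case True
          then show ?thesis using caseI[of P x Q "z i"] PQ P None jx embS embN base[OF i] by auto
        next
          case False
          then show ?thesis using Gsmall[OF PQ] None P F0 Fnot[of P] by auto
        qed
      next
        case (Some b)
        then obtain k y where Q: "Q = Some (k, y)" by (cases b) auto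
        have ky: "k \<in> I" "y \<in> M k" "y \<noteq> z k" using inCC[of k y] PQ Q by auto
        show ?thesis
        proof (cases "j = i")
          case True
          note ji = True
          show ?thesis
          proof (cases "k = i")
            case True
            then show ?thesis using caseI[of P x Q y] PQ P Q ji jx ky embS by auto
          next
            case False
            define t where "t = d i x (z i)"
            define s where "s = d k (z k) y"
            have t0: "t > 0" unfolding t_def using d_pos[OF i] jx ji base[OF i] by auto
            have s0: "s > 0" unfolding s_def using d_pos[OF ky(1)] ky base[OF ky(1)] by auto
            have DPQ: "DD P Q = t + s" using P Q ji False by (simp add: msum_dist_def t_def s_def)
            have FQ: "F Q = 0" using Fnot[of Q] Q False by auto
            have nGQ: "norm (G Q) \<le> e2 * s"
              using Gnorm2[OF PQ(2) FQ] Q by (simp add: msum_dist_def s_def)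
            define A where "A = (1 / s) *\<^sub>R (0 - G Q)"
            define Bv where "Bv = (1 / t) *\<^sub>R (G P - 0)"
            have nA: "norm A \<le> e2" unfolding A_def using nGQ s0 by (simp add: divide_le_eq mult.commute)
            have gx: "g x = G P" using P ji jx embS by (simp add: g_def)
            have Bq: "Bv = qg x (z i)" using gx gz by (simp add: Bv_def qg_def t_def)
            have nB: "norm Bv \<le> K" using Bq qgK[of x "z i"] jx ji base[OF i] by auto
            have "qG P Q = (1 / (s + t)) *\<^sub>R ((0 - G Q) + (G P - 0))"
              by (simp add: qG_def DPQ add.commute)
            also have "\<dots> = (s / (s + t)) *\<^sub>R A + (1 - s / (s + t)) *\<^sub>R Bv"
              unfolding A_def Bv_def by (rule vec_id[OF s0 t0])
            finally have cv: "qG P Q = (s / (s + t)) *\<^sub>R A + (1 - s / (s + t)) *\<^sub>R Bv" .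
            have "norm (qG P Q - Bv) \<le> c * (K - norm (qG P Q))"
              unfolding c_def
              by (rule convex_lemma[OF cv _ _ nA nB eK]) (use s0 t0 in auto)
            hence "norm (qg x (z i) - qG P Q) \<le> c * (K - norm (qG P Q))"
              using Bq by (simp add: norm_minus_commute)
            thus ?thesis using jx ji base[OF i] by blast
          qed
        next
          case False
          note jni = False
          show ?thesis
          proof (cases "k = i")
            case True
            define s where "s = d j x (z j)"
            define t where "t = d i (z i) y"
            have t0: "t > 0" unfolding t_def using d_pos[OF i] ky True base[OF i] by auto
            have s0: "s > 0" unfolding s_def using d_pos[OF jx(1)] jx base[OF jx(1)] by auto
            have DPQ: "DD P Q = s + t" using P Q jni True by (simp add: msum_dist_def t_def s_def)
            have FP: "F P = 0" using Fnot[of P] P jni by auto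
            have nGP: "norm (G P) \<le> e2 * s"
              using Gnorm1[OF PQ(1) FP] P by (simp add: msum_dist_def s_def)
            define A where "A = (1 / s) *\<^sub>R (G P)"
            define Bv where "Bv = (1 / t) *\<^sub>R (0 - G Q)"
            have nA: "norm A \<le> e2" unfolding A_def using nGP s0 by (simp add: divide_le_eq mult.commute)
            have gy: "g y = G Q" using Q True ky embS by (simp add: g_def)
            have Bq: "Bv = qg (z i) y" using gy gz by (simp add: Bv_def qg_def t_def)
            have nB: "norm Bv \<le> K" using Bq qgK[of "z i" y] ky True base[OF i] by auto
            have "qG P Q = (1 / (s + t)) *\<^sub>R (G P + (0 - G Q))"
              by (simp add: qG_def DPQ)
            also have "\<dots> = (s / (s + t)) *\<^sub>R A + (1 - s / (s + t)) *\<^sub>R Bv"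
              unfolding A_def Bv_def by (rule vec_id[OF s0 t0])
            finally have cv: "qG P Q = (s / (s + t)) *\<^sub>R A + (1 - s / (s + t)) *\<^sub>R Bv" .
            have "norm (qG P Q - Bv) \<le> c * (K - norm (qG P Q))"
              unfolding c_def
              by (rule convex_lemma[OF cv _ _ nA nB eK]) (use s0 t0 in auto)
            hence "norm (qg (z i) y - qG P Q) \<le> c * (K - norm (qG P Q))"
              using Bq by (simp add: norm_minus_commute)
            thus ?thesis using ky True base[OF i] by blast
          next
            case False
            then show ?thesis using Gsmall[OF PQ] P Q jni Fnot[of P] Fnot[of Q] by auto
          qed
        qed
      qed
    qed
    obtain y P Q where PQ: "\<forall>n. P n \<in> CC \<and> Q n \<in> CC \<and> P n \<noteq> Q n"
      and lim: "(\<lambda>n. qG (P n) (Q n)) \<longlonglongrightarrow> y" and ny: "norm y = K"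
    proof -
      obtain y where "attains_toward CC DD G y" using GNA by (auto simp: NA_def)
      then obtain P Q where "\<forall>n. P n \<in> CC \<and> Q n \<in> CC \<and> P n \<noteq> Q n"
        "(\<lambda>n. (1 / DD (P n) (Q n)) *\<^sub>R (G (P n) - G (Q n))) \<longlonglongrightarrow> y"
        "norm y = lipnorm CC DD G" unfolding attains_toward_def by blast
      thus ?thesis using that unfolding K_def qG_def by blast
    qed
    define Pr where "Pr n ab \<longleftrightarrow> fst ab \<in> M i \<and> snd ab \<in> M i \<and> fst ab \<noteq> snd ab \<and>
        (norm (qG (P n) (Q n)) \<le> e2 \<or> norm (qg (fst ab) (snd ab) - qG (P n) (Q n)) \<le> c * (K - norm (qG (P n) (Q n))))" for n ab
    define R where "R n = (SOME ab. Pr n ab)" for n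
    have R: "Pr n (R n)" for n
      unfolding R_def
    proof (rule someI_ex)
      have PQn: "P n \<in> CC" "Q n \<in> CC" "P n \<noteq> Q n" using PQ by auto
      show "\<exists>ab. Pr n ab"
      proof (cases "norm (qG (P n) (Q n)) \<le> e2")
        case True then show ?thesis using ab0 unfolding Pr_def by (intro exI[of _ "(a0, b0)"]) simp
      next
        case False
        then obtain a b where "a \<in> M i" "b \<in> M i" "a \<noteq> b"
            "norm (qg a b - qG (P n) (Q n)) \<le> c * (K - norm (qG (P n) (Q n)))"
          using key[OF PQn] by blast
        then show ?thesis unfolding Pr_def by (intro exI[of _ "(a, b)"]) simp
      qed
    qed
    have nlim: "(\<lambda>n. norm (qG (P n) (Q n))) \<longlonglongrightarrow> K" using tendsto_norm[OF lim] ny by simp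
    have ev: "eventually (\<lambda>n. norm (qG (P n) (Q n)) > e2) sequentially"
      using order_tendstoD(1)[OF nlim eK] .
    have ev2: "eventually (\<lambda>n. norm (qg (fst (R n)) (snd (R n)) - qG (P n) (Q n)) \<le> c * (K - norm (qG (P n) (Q n)))) sequentially"
      using ev
    proof eventually_elim
      case (elim n) then show ?case using R[of n] unfolding Pr_def by auto
    qed
    have "(\<lambda>n. c * (K - norm (qG (P n) (Q n)))) \<longlonglongrightarrow> c * (K - K)"
      by (intro tendsto_intros nlim)
    hence zero: "(\<lambda>n. c * (K - norm (qG (P n) (Q n)))) \<longlonglongrightarrow> 0" by simp
    have diff: "(\<lambda>n. qg (fst (R n)) (snd (R n)) - qG (P n) (Q n)) \<longlonglongrightarrow> 0"
      by (rule Lim_null_comparison[OF ev2 zero])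
    have lim2: "(\<lambda>n. qg (fst (R n)) (snd (R n))) \<longlonglongrightarrow> y"
      using tendsto_add[OF lim diff] by simp
    have "norm y \<le> lipnorm (M i) (d i) g"
    proof (rule LIMSEQ_le_const2[OF tendsto_norm[OF lim2]])
      show "\<exists>N. \<forall>n\<ge>N. norm (qg (fst (R n)) (snd (R n))) \<le> lipnorm (M i) (d i) g"
        using qglg R unfolding Pr_def by blast
    qed
    hence nyg: "norm y = lipnorm (M i) (d i) g" using lgK ny by linarith
    have "attains_toward (M i) (d i) g y"
      unfolding attains_toward_def
    proof (intro exI conjI)
      show "\<forall>n. fst (R n) \<in> M i \<and> snd (R n) \<in> M i \<and> fst (R n) \<noteq> snd (R n)"
        using R unfolding Pr_def by blast
      show "(\<lambda>n. (1 / d i (fst (R n)) (snd (R n))) *\<^sub>R (g (fst (R n)) - g (snd (R n)))) \<longlonglongrightarrow> y"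
        using lim2 unfolding qg_def .
      show "norm y = lipnorm (M i) (d i) g" by (rule nyg)
    qed
    hence "g \<in> NA (M i) (d i) (z i)" using gLip by (auto simp: NA_def)
    moreover have "lipnorm (M i) (d i) (\<lambda>x. f x - g x) < e" using fg e2e3 by linarith
    ultimately show ?thesis by blast
  qed
qed

end


theorem theorem3p5:
  fixes I :: "'i set" and M :: "'i \<Rightarrow> 'a set" and d :: "'i \<Rightarrow> 'a \<Rightarrow> 'a \<Rightarrow> real"
    and z :: "'i \<Rightarrow> 'a"
  assumes metric: "\<And>i. i \<in> I \<Longrightarrow> Metric_space (M i) (d i)"
    and complete: "\<And>i. i \<in> I \<Longrightarrow> Metric_space.mcomplete (M i) (d i)"
    and base: "\<And>i. i \<in> I \<Longrightarrow> z i \<in> M i"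
    and nontriv: "\<And>i. i \<in> I \<Longrightarrow> M i \<noteq> {z i}"
    and Ine: "I \<noteq> {}"
  shows "(\<forall>i\<in>I. dense_in_Lip0 (M i) (d i) (z i) (NA (M i) (d i) (z i) :: ('a \<Rightarrow> 'b::banach) set))
     \<longleftrightarrow> dense_in_Lip0 (msum_carrier I M z) (msum_dist d z) None
           (NA (msum_carrier I M z) (msum_dist d z) None :: (('i \<times> 'a) option \<Rightarrow> 'b) set)"
proof -
  interpret msumloc I M d z
    by (rule msumloc.intro) (use metric base nontriv Ine in auto)
  show ?thesis using dir_ab dir_ba by blast
qed

end
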